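(* Let $n\ge 3$ be odd and let $a_0,a_1,\dots,a_{n-1}\in\mathbb{R}$. Let $A'$ be the $n\times n$ matrix with rows and columns indexed by $0,\dots,n-1$ (modulo $n$) with entries $(A')_{j,j+1}=a_{j+1}$, $(A')_{j,j-1}=-a_{j-1}$ (indices mod $n$) and all other entries zero, and let $\mathcal A(x)=\det(xI-A')$. If $a_0<0$, $a_k>0$ for all $k\neq0$, and $a_0+a_2<0$, then $$\mathcal A\big(\sqrt{-a_1(a_0+a_2)}\big)<0 .$$
   Context: For example, for $n$ odd the first row of $A'$ is $(0,a_1,0,\dots,0,-a_{n-1})$ and the last row is $(a_0,0,\dots,0,-a_{n-2},0)$. *)

theory Defs
  imports Complex_Main "Jordan_Normal_Form.Determinant"
begin

definition Amat :: "nat \<Rightarrow> (nat \<Rightarrow> real) \<Rightarrow> real mat" where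
  "Amat n a = mat n n (\<lambda>(i, j).
     if j = (i + 1) mod n then a j
     else if j = (i + n - 1) mod n then - a j
     else 0)"

definition charA :: "nat \<Rightarrow> (nat \<Rightarrow> real) \<Rightarrow> real \<Rightarrow> real" where
  "charA n a x = det (x \<cdot>\<^sub>m 1\<^sub>m n - Amat n a)"

end

theory Submission
  imports Defs
begin

definition Tri :: "nat \<Rightarrow> nat \<Rightarrow> real \<Rightarrow> (nat\<Rightarrow>real) \<Rightarrow> real mat" where
 "Tri s m x a = mat m m (\<lambda>(i,j). if i = j then x else if j = Suc i then - a (s+j)
     else if i = Suc j then a (s+j) else 0)"

lemma Tri_carrier[simp]: "Tri s m x a \<in> carrier_mat m m"
  by (simp add: Tri_def)

lemma Tri_rec: "det (Tri s (Suc (Suc m)) x a) =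
   x * det (Tri (Suc s) (Suc m) x a) + a s * a (Suc s) * det (Tri (s+2) m x a)"
proof -
  let ?T = "Tri s (Suc (Suc m)) x a"
  have T: "?T \<in> carrier_mat (Suc(Suc m)) (Suc(Suc m))" by simp
  have "det ?T = (\<Sum>j<Suc(Suc m). ?T $$ (0,j) * cofactor ?T 0 j)"
    by (rule laplace_expansion_row[OF T]) simp
  also have "\<dots> = ?T $$ (0,0) * cofactor ?T 0 0 + ?T $$ (0,1) * cofactor ?T 0 1"
    by (simp only: sum.lessThan_Suc_shift) (simp add: Tri_def)
  moreover have "mat_delete ?T 0 0 = Tri (Suc s) (Suc m) x a"
    by (rule eq_matI) (auto simp: mat_delete_def Tri_def)
  moreover have "det (mat_delete ?T 0 1) = a s * det (Tri (s+2) m x a)"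
  proof -
    let ?C = "mat_delete ?T 0 1"
    have C: "?C \<in> carrier_mat (Suc m) (Suc m)" by (simp add: mat_delete_def Tri_def)
    have "det ?C = (\<Sum>i<Suc m. ?C $$ (i,0) * cofactor ?C i 0)"
      by (rule laplace_expansion_column[OF C]) simp
    also have "\<dots> = ?C $$ (0,0) * cofactor ?C 0 0"
      by (simp only: sum.lessThan_Suc_shift) (simp add: Tri_def mat_delete_def)
    moreover have "mat_delete ?C 0 0 = Tri (s+2) m x a"
      by (rule eq_matI) (auto simp: mat_delete_def Tri_def)
    ultimately show ?thesis by (simp add: cofactor_def mat_delete_def Tri_def)
  qed
  ultimately show ?thesis by (simp add: cofactor_def Tri_def)
qed

lemma Tri_0: "det (Tri s 0 x a) = 1" by (simp add: Tri_def)
lemma Tri_1: "det (Tri s 1 x a) = x"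
  by (subst det_single[of _]) (auto simp: Tri_def)

lemma Tri_pos: "x > 0 \<Longrightarrow> (\<forall>k. s \<le> k \<and> k < s+m \<longrightarrow> a k > 0) \<Longrightarrow> det (Tri s m x a) > 0"
proof (induction m arbitrary: s rule: less_induct)
  case (less m)
  show ?case
  proof (cases m)
    case 0 then show ?thesis by (simp add: Tri_0)
  next
    case (Suc m1)
    show ?thesis
    proof (cases m1)
      case 0 then show ?thesis using Suc less.prems Tri_1[of s x a] by simp
    next
      case (Suc m2)
      have h1: "det (Tri (Suc s) (Suc m2) x a) > 0"
        using less.IH[of "Suc m2" "Suc s"] less.prems \<open>m = Suc m1\<close> Suc by auto
      have h2: "det (Tri (s+2) m2 x a) > 0"
        using less.IH[of "m2" "s+2"] less.prems \<open>m = Suc m1\<close> Suc by auto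
      have "a s > 0" "a (Suc s) > 0" using less.prems \<open>m = Suc m1\<close> Suc by auto
      then show ?thesis using h1 h2 less.prems(1) \<open>m = Suc m1\<close> Suc
        by (simp add: Tri_rec add_pos_pos)
    qed
  qed
qed

lemma Amat_dim[simp]: "dim_row (Amat n a) = n" "dim_col (Amat n a) = n"
  by (auto simp: Amat_def)
definition Bm where "Bm n a x = x \<cdot>\<^sub>m 1\<^sub>m n - Amat n a"
lemma Bm_dim[simp]: "dim_row (Bm n a x) = n" "dim_col (Bm n a x) = n"
  by (auto simp: Bm_def)
lemma B_entry:
  assumes "n \<ge> 3" "r < n" "c < n"
  shows "(Bm n a x) $$ (r,c) =
    (if r = c then x else if r+1<n \<and> c = r+1 then - a c else if r = n-1 \<and> c = 0 then - a 0
     else if 0<r \<and> c = r-1 then a c else if r=0 \<and> c = n-1 then a (n-1) else 0)"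
proof -
  have m1: "(r+1) mod n = (if r+1<n then r+1 else 0)"
  proof (cases "r+1<n")
    case False then have "r+1 = n" using assms by simp
    then show ?thesis by simp
  qed simp
  have m2: "(r+n-1) mod n = (if 0<r then r-1 else n-1)"
  proof (cases "0<r")
    case True
    then have e: "r+n-1 = (r-1) + n" by simp
    have "(r - 1 + n) mod n = r - 1" using assms by simp
    then show ?thesis using True by (simp only: e if_True)
  next
    case False then show ?thesis using assms by simp
  qed
  have "(Bm n a x) $$ (r,c) = (if r = c then x else 0) -
      (if c = (r + 1) mod n then a c else if c = (r + n - 1) mod n then - a c else 0)"
    using assms unfolding Bm_def Amat_def by simp
  also have "\<dots> = (if r = c then x else 0) -
      (if c = (if r+1<n then r+1 else 0) then a c else if c = (if 0<r then r-1 else n-1) then - a c else 0)"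
    by (simp only: m1 m2)
  finally show ?thesis using assms by auto
qed

lemma B_inner: assumes "n \<ge> 3" "0 < r" "r < n" "0 < c" "c < n"
  shows "Bm n a x $$ (r,c) = (if r = c then x else if c = r+1 then - a c else if r = c+1 then a c else 0)"
  using B_entry[OF assms(1) assms(3) assms(5), of a x] assms by auto
lemma B_row0: assumes "n \<ge> 3" "c < n"
  shows "Bm n a x $$ (0,c) = (if c = 0 then x else if c = 1 then - a 1 else if c = n-1 then a (n-1) else 0)"
  using B_entry[OF assms(1) _ assms(2), of 0 a x] assms by auto
lemma B_col0: assumes "n \<ge> 3" "0 < r" "r < n"
  shows "Bm n a x $$ (r,0) = (if r = 1 then a 0 else if r = n-1 then - a 0 else 0)"
  using B_entry[OF assms(1) assms(3), of 0 a x] assms by auto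

lemma sum3: assumes "(3::nat) \<le> n" "\<forall>j<n. j \<noteq> 0 \<and> j \<noteq> 1 \<and> j \<noteq> n-1 \<longrightarrow> f j = 0"
  shows "(\<Sum>j<n. f j) = f 0 + f 1 + (f (n-1) :: real)"
proof -
  have "(\<Sum>j<n. f j) = sum f {0,1,n-1}"
    by (rule sum.mono_neutral_right) (use assms in auto)
  then show ?thesis using assms by simp
qed

lemma sum2: assumes "0 < (k::nat)" "k < n" "\<forall>j<n. j \<noteq> 0 \<and> j \<noteq> k \<longrightarrow> f j = 0"
  shows "(\<Sum>j<n. f j) = f 0 + (f k :: real)"
proof -
  have "(\<Sum>j<n. f j) = sum f {0,k}"
    using assms by (intro sum.mono_neutral_right) auto
  then show ?thesis using assms(1) by simp
qed

lemma prod_list_upt: "prod_list (map f [0..<k]) = (\<Prod>i<k. f i)"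
  by (induction k) (simp_all add: lessThan_Suc ac_simps)

lemma det_formula:
  assumes n3: "n \<ge> 3" and odd: "odd n"
  shows "det (Bm n a x) = x * det (Tri 1 (n-1) x a)
     + a 0 * a 1 * det (Tri 2 (n-2) x a) + a 0 * a (n-1) * det (Tri 1 (n-2) x a)"
proof -
  let ?B = "Bm n a x"
  have B: "?B \<in> carrier_mat n n" by (rule carrier_matI) simp_all
  note BE = B_inner[OF n3] B_row0[OF n3] B_col0[OF n3]
  have nf: "n - 2 < n - Suc 0" "Suc (n - 2) = n - 1" using n3 by auto
  have "det ?B = (\<Sum>j<n. ?B $$ (0,j) * cofactor ?B 0 j)"
    by (rule laplace_expansion_row[OF B]) (use n3 in simp)
  also have "\<dots> = ?B $$ (0,0) * cofactor ?B 0 0 + ?B $$ (0,1) * cofactor ?B 0 1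
     + ?B $$ (0,n-1) * cofactor ?B 0 (n-1)"
    by (rule sum3[OF n3]) (use n3 in \<open>auto simp: BE\<close>)
  also have "?B $$ (0,0) = x" using n3 by (simp add: BE)
  also have "?B $$ (0,1) = - a 1" using n3 by (simp add: BE)
  also have "?B $$ (0,n-1) = a (n-1)" using n3 by (simp add: BE)
  finally have e1: "det ?B = x * det (mat_delete ?B 0 0) + a 1 * det (mat_delete ?B 0 1)
     + a (n-1) * ((-1)^(n-1) * det (mat_delete ?B 0 (n-1)))"
    by (simp add: cofactor_def)
  have e2: "mat_delete ?B 0 0 = Tri 1 (n-1) x a"
  proof (rule eq_matI)
    fix i j assume ij: "i < dim_row (Tri 1 (n-1) x a)" "j < dim_col (Tri 1 (n-1) x a)"
    then have "i < n-1" "j < n-1" by (auto simp: Tri_def)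
    then show "mat_delete ?B 0 0 $$ (i, j) = Tri 1 (n-1) x a $$ (i, j)"
      using n3 by (auto simp: mat_delete_def Tri_def BE)
  qed (auto simp: Tri_def)
  let ?C = "mat_delete ?B 0 1"
  have C: "?C \<in> carrier_mat (n-1) (n-1)" by (rule carrier_matI) simp_all
  have "det ?C = (\<Sum>i<n-1. ?C $$ (i,0) * cofactor ?C i 0)"
    by (rule laplace_expansion_column[OF C]) (use n3 in simp)
  also have "\<dots> = ?C $$ (0,0) * cofactor ?C 0 0 + ?C $$ (n-2,0) * cofactor ?C (n-2) 0"
    by (rule sum2) (use n3 in \<open>auto simp: BE mat_delete_def\<close>)
  also have "?C $$ (0,0) = a 0" using n3 by (simp add: BE mat_delete_def)
  also have "?C $$ (n-2,0) = - a 0" using n3 by (simp add: BE mat_delete_def)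
  finally have c1: "det ?C = a 0 * det (mat_delete ?C 0 0) + - a 0 * ((-1)^(n-2) * det (mat_delete ?C (n-2) 0))"
    by (simp add: cofactor_def)
  have c2: "mat_delete ?C 0 0 = Tri 2 (n-2) x a"
  proof (rule eq_matI)
    fix i j assume ij: "i < dim_row (Tri 2 (n-2) x a)" "j < dim_col (Tri 2 (n-2) x a)"
    then have "i < n-2" "j < n-2" by (auto simp: Tri_def)
    then show "mat_delete ?C 0 0 $$ (i, j) = Tri 2 (n-2) x a $$ (i, j)"
      using n3 by (auto simp: mat_delete_def Tri_def BE)
  qed (auto simp: Tri_def mat_delete_def)
  let ?L = "mat_delete ?C (n-2) 0"
  have L: "?L \<in> carrier_mat (n-2) (n-2)" by (rule carrier_matI) (simp_all add: mat_delete_def)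
  have "det ?L = prod_list (diag_mat ?L)"
    by (rule det_lower_triangular[OF _ L]) (use n3 in \<open>auto simp: BE mat_delete_def\<close>)
  also have "\<dots> = (\<Prod>i<n-2. - a (i+2))"
    using n3 by (auto simp: diag_mat_def prod_list_upt BE mat_delete_def intro!: prod.cong)
  finally have c3: "det ?L = (\<Prod>i<n-2. - a (i+2))" .
  let ?D = "mat_delete ?B 0 (n-1)"
  have D: "?D \<in> carrier_mat (n-1) (n-1)" by (rule carrier_matI) simp_all
  have "det ?D = (\<Sum>j<n-1. ?D $$ (n-2,j) * cofactor ?D (n-2) j)"
    by (rule laplace_expansion_row[OF D]) (use n3 in simp)
  also have "\<dots> = ?D $$ (n-2,0) * cofactor ?D (n-2) 0 + ?D $$ (n-2,n-2) * cofactor ?D (n-2) (n-2)"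
    by (rule sum2) (use n3 in \<open>auto simp: BE mat_delete_def\<close>)
  also have "?D $$ (n-2,0) = - a 0" using n3 by (simp add: BE mat_delete_def)
  also have "?D $$ (n-2,n-2) = a (n-2)" using n3 nf by (simp add: BE mat_delete_def)
  finally have d1: "det ?D = - a 0 * ((-1)^(n-2) * det (mat_delete ?D (n-2) 0))
      + a (n-2) * ((-1)^(n-2+(n-2)) * det (mat_delete ?D (n-2) (n-2)))"
    by (simp add: cofactor_def)
  have d2: "mat_delete ?D (n-2) 0 = Tri 1 (n-2) x a"
  proof (rule eq_matI)
    fix i j assume ij: "i < dim_row (Tri 1 (n-2) x a)" "j < dim_col (Tri 1 (n-2) x a)"
    then have "i < n-2" "j < n-2" by (auto simp: Tri_def)
    then show "mat_delete ?D (n-2) 0 $$ (i, j) = Tri 1 (n-2) x a $$ (i, j)"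
      using n3 by (auto simp: mat_delete_def Tri_def BE)
  qed (auto simp: Tri_def mat_delete_def)
  let ?U = "mat_delete ?D (n-2) (n-2)"
  have U: "?U \<in> carrier_mat (n-2) (n-2)" by (rule carrier_matI) (simp_all add: mat_delete_def)
  have "det ?U = prod_list (diag_mat ?U)"
  proof (rule det_upper_triangular[OF _ U])
    show "upper_triangular ?U" unfolding upper_triangular_def
    proof (intro allI impI)
      fix i j assume ij: "i < dim_row ?U" "j < i"
      then have i: "i < n-2" by (simp add: mat_delete_def)
      show "?U $$ (i,j) = 0"
      proof (cases "j=0")
        case True then show ?thesis using i ij n3 by (simp add: mat_delete_def BE)
      next
        case False then show ?thesis using i ij n3 by (simp add: mat_delete_def BE)
      qed
    qed
  qed
  also have "\<dots> = (\<Prod>i<n-2. a i)"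
  proof -
    have "\<forall>i<n-2. ?U $$ (i,i) = a i"
    proof (intro allI impI)
      fix i assume i0: "i < n-2"
      then have i: "i < n-2" "i < n - Suc 0" by auto
      show "?U $$ (i,i) = a i"
      proof (cases "i=0")
        case True then show ?thesis using i n3 by (simp add: mat_delete_def BE)
      next
        case False then show ?thesis using i n3 by (simp add: mat_delete_def BE)
      qed
    qed
    then show ?thesis by (simp add: diag_mat_def prod_list_upt numeral_2_eq_2)
  qed
  finally have d3: "det ?U = (\<Prod>i<n-2. a i)" .
  define k where "k = n - 2"
  have nk: "n = Suc (Suc k)" using n3 k_def by simp
  have P1: "(\<Prod>i<n. a i) = a 0 * a 1 * (\<Prod>i<n-2. a (i+2))"
  proof -
    have "(\<Prod>i<Suc (Suc k). a i) = a 0 * (a 1 * (\<Prod>i<k. a (Suc (Suc i))))"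
      by (simp only: prod.lessThan_Suc_shift One_nat_def)
    then show ?thesis unfolding nk by simp
  qed
  have P2: "(\<Prod>i<n. a i) = (\<Prod>i<n-2. a i) * a (n-2) * a (n-1)"
  proof -
    have "(\<Prod>i<Suc (Suc k). a i) = (\<Prod>i<k. a i) * a k * a (Suc k)"
      by (simp only: prod.lessThan_Suc)
    then show ?thesis unfolding nk by simp
  qed
  have s1: "(-1::real)^(n-1) = 1" using odd n3 by (simp add: nk)
  have s2: "(-1::real)^(n-2) = -1" using odd n3 by (simp add: nk)
  have s3: "(-1::real)^(n-2+(n-2)) = 1" by (simp flip: mult_2)
  have c3': "det ?L = - (\<Prod>i<n-2. a (i+2))" using c3 s2 by (simp add: prod_uminus)
  have "det ?B = x * det (Tri 1 (n-1) x a) + a 1 * (a 0 * det (Tri 2 (n-2) x a) - a 0 * (\<Prod>i<n-2. a (i+2)))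
     + a (n-1) * (a 0 * det (Tri 1 (n-2) x a) + a (n-2) * (\<Prod>i<n-2. a i))"
    using e1 e2 c1 c2 c3' d1 d2 d3 s1 s2 s3 by simp
  then show ?thesis using P1 P2 by (simp add: algebra_simps)
qed

theorem lemma2:
  fixes n :: nat and a :: "nat \<Rightarrow> real"
  assumes "n \<ge> 3" and "odd n"
    and "a 0 < 0"
    and "\<forall>k. 0 < k \<and> k < n \<longrightarrow> a k > 0"
    and "a 0 + a 2 < 0"
  shows "charA n a (sqrt (- a 1 * (a 0 + a 2))) < 0"
proof -
  note n3 = assms(1)
  define X where "X = sqrt (- a 1 * (a 0 + a 2))"
  have a1: "a 1 > 0" and a2: "a 2 > 0" and an: "a (n-1) > 0" using assms by auto
  have rad: "- a 1 * (a 0 + a 2) > 0" using a1 assms(5) by (simp add: mult_pos_neg)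
  have Xpos: "X > 0" unfolding X_def using rad by simp
  have X2: "X * X = - a 1 * (a 0 + a 2)" unfolding X_def using rad by simp
  have ch: "charA n a X = det (Bm n a X)" by (simp add: charA_def Bm_def)
  have nn: "n - 1 = Suc (Suc (n-3))" "Suc (n-3) = n - 2" using n3 by auto
  have P1: "det (Tri 1 (n-1) X a) = X * det (Tri 2 (n-2) X a) + a 1 * a 2 * det (Tri 3 (n-3) X a)"
    using Tri_rec[of 1 "n-3" X a] nn by (simp add: numeral_2_eq_2 numeral_3_eq_3)
  have Q: "X * det (Tri 3 (n-3) X a) - det (Tri 2 (n-2) X a) \<le> 0"
  proof (cases "n = 3")
    case True then show ?thesis by (simp add: Tri_0 Tri_1[of 2 X a, simplified])
  next
    case False
    with n3 assms(2) have n5: "n \<ge> 5" by presburger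
    have mm: "n - 2 = Suc (Suc (n-4))" "Suc (n-4) = n - 3" using n5 by auto
    have "det (Tri 2 (n-2) X a) = X * det (Tri 3 (n-3) X a) + a 2 * a 3 * det (Tri 4 (n-4) X a)"
      using Tri_rec[of 2 "n-4" X a] mm by (simp add: numeral_2_eq_2 numeral_3_eq_3 eval_nat_numeral)
    moreover have "det (Tri 4 (n-4) X a) > 0"
      by (rule Tri_pos[OF Xpos]) (use assms(4) n5 in auto)
    moreover have "a 3 > 0" using assms(4) n5 by auto
    ultimately show ?thesis using a2 by (simp add: mult_pos_pos)
  qed
  have T1: "det (Tri 1 (n-2) X a) > 0"
    by (rule Tri_pos[OF Xpos]) (use assms(4) n3 in auto)
  have neg: "a 0 * a (n-1) < 0" using assms(3) an by (simp add: mult_neg_pos)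
  have "det (Bm n a X) = a 1 * a 2 * (X * det (Tri 3 (n-3) X a) - det (Tri 2 (n-2) X a))
         + a 0 * a (n-1) * det (Tri 1 (n-2) X a)"
  proof -
    have XX: "X * (X * det (Tri 2 (n-2) X a)) = - a 1 * (a 0 + a 2) * det (Tri 2 (n-2) X a)"
      using X2 by (simp flip: mult.assoc)
    have "det (Bm n a X) = X * (X * det (Tri 2 (n-2) X a)) + X * (a 1 * a 2 * det (Tri 3 (n-3) X a))
         + a 0 * a 1 * det (Tri 2 (n-2) X a) + a 0 * a (n-1) * det (Tri 1 (n-2) X a)"
      using det_formula[OF n3 assms(2), of a X] P1 by (simp add: distrib_left)
    then show ?thesis unfolding XX by (simp add: algebra_simps)
  qed
  moreover have "a 1 * a 2 * (X * det (Tri 3 (n-3) X a) - det (Tri 2 (n-2) X a)) \<le> 0"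
    using Q a1 a2 by (simp add: mult_nonneg_nonpos)
  moreover have "a 0 * a (n-1) * det (Tri 1 (n-2) X a) < 0"
    using neg T1 by (simp add: mult_neg_pos)
  ultimately show ?thesis unfolding X_def[symmetric] ch by linarith
qed

end
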